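(* Let $n$ be an odd multiple of $3$. Then it is possible to place $n-2$ queens on $\mathbb{Z}_n^2$ without conflict.
   Context: Queens are placed on distinct fields of the torus board $\mathbb{Z}_n^2$. Two queens at distinct fields $(x,y),(x',y')$ are in conflict iff $x=x'$, or $y=y'$, or $x+y=x'+y'$, or $x-y=x'-y'$ in $\mathbb{Z}_n$. A placement is without conflict if no two queens are in conflict. *)

theory Defs
  imports Main
begin

text \<open>Fields of the torus board Z_n^2 are represented by pairs (x,y) with 0 <= x,y < n.
  Arithmetic in Z_n is expressed by congruences modulo n on the integers.\<close>

definition torus_board :: "nat \<Rightarrow> (int \<times> int) set" where
  "torus_board n = {0..<int n} \<times> {0..<int n}"

definition queens_conflict :: "nat \<Rightarrow> int \<times> int \<Rightarrow> int \<times> int \<Rightarrow> bool" where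
  "queens_conflict n p q \<longleftrightarrow>
     (case p of (x, y) \<Rightarrow> case q of (x', y') \<Rightarrow>
        x mod int n = x' mod int n \<or> y mod int n = y' mod int n \<or>
        (x + y) mod int n = (x' + y') mod int n \<or> (x - y) mod int n = (x' - y') mod int n)"

definition conflict_free :: "nat \<Rightarrow> (int \<times> int) set \<Rightarrow> bool" where
  "conflict_free n Q \<longleftrightarrow> Q \<subseteq> torus_board n \<and>
     (\<forall>p\<in>Q. \<forall>q\<in>Q. p \<noteq> q \<longrightarrow> \<not> queens_conflict n p q)"

end

theory Submission imports Defs begin
definition dd :: "int \<Rightarrow> int \<Rightarrow> int" where
  "dd h i = (if i < h then 0 else if i < 3*h+1 then -1 else if i < 4*h+2 then 0 else 1)"

definition inS :: "int \<Rightarrow> int \<Rightarrow> bool" where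
  "inS h i \<longleftrightarrow> 0 \<le> i \<and> i < 6*h+3 \<and> i \<noteq> h \<and> i \<noteq> 6*h+2"

lemma row1:
  fixes h i j :: int
  assumes "h \<ge> 0" "inS h i" "inS h j"
    "(2*i + dd h i) - (2*j + dd h j) = (6*h+3) * 1"
  shows False
  using assms unfolding dd_def inS_def
  apply (auto split: if_splits)
  apply presburger+
  done

lemma row0:
  fixes h i j :: int
  assumes "h \<ge> 0" "inS h i" "inS h j"
    "(2*i + dd h i) - (2*j + dd h j) = 0"
  shows "i = j"
  using assms unfolding dd_def inS_def
  by (auto split: if_splits)

lemma sum0:
  fixes h i j :: int
  assumes "h \<ge> 0" "inS h i" "inS h j"
    "(3*i + dd h i) - (3*j + dd h j) = 0"
  shows "i = j"
  using assms unfolding dd_def inS_def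
  by (auto split: if_splits)

lemma sum1:
  fixes h i j :: int
  assumes "h \<ge> 0" "inS h i" "inS h j"
    "(3*i + dd h i) - (3*j + dd h j) = (6*h+3) * 1"
  shows False
  using assms unfolding dd_def inS_def
  apply (auto split: if_splits)
  apply presburger+
  done

lemma sum2:
  fixes h i j :: int
  assumes "h \<ge> 0" "inS h i" "inS h j"
    "(3*i + dd h i) - (3*j + dd h j) = (6*h+3) * 2"
  shows False
  using assms unfolding dd_def inS_def
  apply (auto split: if_splits)
  apply presburger+
  done

lemma dif0:
  fixes h i j :: int
  assumes "h \<ge> 0" "inS h i" "inS h j"
    "(i + dd h i) = (j + dd h j)"
  shows "i = j"
  using assms unfolding dd_def inS_def
  by (auto split: if_splits)

lemma kb:
  fixes N k a c :: int
  assumes "N > 0" "a = N * k" "a < c*N" "-c*N < a"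
  shows "-c < k \<and> k < c"
proof -
  have "N * k < N * c" using assms by (simp add: mult.commute)
  hence "k < c" using assms(1) by (simp add: mult_less_cancel_left_pos)
  moreover have "N * (-c) < N * k" using assms by (simp add: mult.commute)
  hence "-c < k" using assms(1) mult_less_cancel_left_pos[of N "-c" k] by blast
  ultimately show ?thesis by simp
qed

lemma modeqE:
  fixes a b n :: int
  assumes "a mod n = b mod n"
  obtains k where "a - b = n * k"
  using assms by (metis dvd_def mod_eq_dvd_iff)

lemma bnds:
  fixes h i :: int
  assumes "h \<ge> 0" "inS h i"
  shows "0 \<le> 2*i + dd h i" "2*i + dd h i < 2*(6*h+3)"
    "0 \<le> 3*i + dd h i" "3*i + dd h i < 3*(6*h+3)"
    "0 \<le> i + dd h i" "i + dd h i < 6*h+3"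
  using assms unfolding dd_def inS_def by auto

lemma row_ok:
  fixes h i j :: int
  assumes h: "h \<ge> 0" and i: "inS h i" and j: "inS h j"
    and eq: "(2*i + dd h i) mod (6*h+3) = (2*j + dd h j) mod (6*h+3)"
  shows "i = j"
proof -
  obtain k where k: "(2*i + dd h i) - (2*j + dd h j) = (6*h+3) * k"
    using eq by (rule modeqE)
  have "-2 < k \<and> k < 2"
    by (rule kb[OF _ k]) (use bnds[OF h i] bnds[OF h j] h in auto)
  then consider "k = -1" | "k = 0" | "k = 1" by linarith
  then show ?thesis
  proof cases
    case 1
    have "(2*j + dd h j) - (2*i + dd h i) = (6*h+3) * 1" using k 1 by simp
    then show ?thesis using row1[OF h j i] by blast
  next
    case 2 then show ?thesis using row0[OF h i j] k by simp
  next
    case 3 then show ?thesis using row1[OF h i j] k by simp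
  qed
qed

lemma sum_ok:
  fixes h i j :: int
  assumes h: "h \<ge> 0" and i: "inS h i" and j: "inS h j"
    and eq: "(3*i + dd h i) mod (6*h+3) = (3*j + dd h j) mod (6*h+3)"
  shows "i = j"
proof -
  obtain k where k: "(3*i + dd h i) - (3*j + dd h j) = (6*h+3) * k"
    using eq by (rule modeqE)
  have "-3 < k \<and> k < 3"
    by (rule kb[OF _ k]) (use bnds[OF h i] bnds[OF h j] h in auto)
  then consider "k = -2" | "k = -1" | "k = 0" | "k = 1" | "k = 2" by linarith
  then show ?thesis
  proof cases
    case 1
    have "(3*j + dd h j) - (3*i + dd h i) = (6*h+3) * 2" using k 1 by simp
    then show ?thesis using sum2[OF h j i] by blast
  next
    case 2
    have "(3*j + dd h j) - (3*i + dd h i) = (6*h+3) * 1" using k 2 by simp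
    then show ?thesis using sum1[OF h j i] by blast
  next
    case 3 then show ?thesis using sum0[OF h i j] k by simp
  next
    case 4 then show ?thesis using sum1[OF h i j] k by simp
  next
    case 5 then show ?thesis using sum2[OF h i j] k by simp
  qed
qed

lemma dif_ok:
  fixes h i j :: int
  assumes h: "h \<ge> 0" and i: "inS h i" and j: "inS h j"
    and eq: "(i + dd h i) mod (6*h+3) = (j + dd h j) mod (6*h+3)"
  shows "i = j"
proof -
  have "(i + dd h i) = (j + dd h j)"
    using eq bnds[OF h i] bnds[OF h j] by simp
  then show ?thesis using dif0[OF h i j] by blast
qed

lemma main_int:
  fixes h :: int
  assumes h: "h \<ge> 0"
  defines "N \<equiv> 6*h+3"
  assumes i: "inS h i" and j: "inS h j" and ne: "i \<noteq> j"
  shows "\<not> queens_conflict (nat N) (i, (2*i + dd h i) mod N) (j, (2*j + dd h j) mod N)"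
proof -
  have NN: "int (nat N) = N" using h N_def by simp
  have i0: "0 \<le> i" "i < N" using i unfolding inS_def N_def by auto
  have j0: "0 \<le> j" "j < N" using j unfolding inS_def N_def by auto
  have c1: "i mod N \<noteq> j mod N"
    using i0 j0 ne by simp
  have c2: "(2*i + dd h i) mod N mod N \<noteq> (2*j + dd h j) mod N mod N"
  proof
    assume "(2*i + dd h i) mod N mod N = (2*j + dd h j) mod N mod N"
    hence "(2*i + dd h i) mod (6*h+3) = (2*j + dd h j) mod (6*h+3)"
      unfolding N_def by simp
    thus False using row_ok[OF h i j] ne by blast
  qed
  have e3: "(x + (2*x + dd h x) mod N) mod N = (3*x + dd h x) mod N" for x
  proof -
    have "(x + (2*x + dd h x) mod N) mod N = (x + (2*x + dd h x)) mod N"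
      by (rule mod_add_right_eq)
    also have "x + (2*x + dd h x) = 3*x + dd h x" by simp
    finally show ?thesis .
  qed
  have c3: "(i + (2*i + dd h i) mod N) mod N \<noteq> (j + (2*j + dd h j) mod N) mod N"
  proof
    assume "(i + (2*i + dd h i) mod N) mod N = (j + (2*j + dd h j) mod N) mod N"
    hence "(3*i + dd h i) mod N = (3*j + dd h j) mod N"
      unfolding e3 .
    hence "(3*i + dd h i) mod (6*h+3) = (3*j + dd h j) mod (6*h+3)"
      unfolding N_def .
    thus False using sum_ok[OF h i j] ne by blast
  qed
  have e4: "(x - (2*x + dd h x) mod N) mod N = (- (x + dd h x)) mod N" for x
  proof -
    have "(x - (2*x + dd h x) mod N) mod N = (x - (2*x + dd h x)) mod N"
      by (rule mod_diff_right_eq)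
    also have "x - (2*x + dd h x) = - (x + dd h x)" by simp
    finally show ?thesis .
  qed
  have c4: "(i - (2*i + dd h i) mod N) mod N \<noteq> (j - (2*j + dd h j) mod N) mod N"
  proof
    assume "(i - (2*i + dd h i) mod N) mod N = (j - (2*j + dd h j) mod N) mod N"
    hence "(- (i + dd h i)) mod N = (- (j + dd h j)) mod N" unfolding e4 .
    hence "(i + dd h i) mod N = (j + dd h j) mod N"
      using mod_minus_cong[of "- (i + dd h i)" N "- (j + dd h j)"] by (simp add: add.commute)
    hence "(i + dd h i) mod (6*h+3) = (j + dd h j) mod (6*h+3)"
      unfolding N_def .
    thus False using dif_ok[OF h i j] ne by blast
  qed
  show ?thesis unfolding queens_conflict_def NN prod.case
    using c1 c2 c3 c4 by (intro notI) (elim disjE; blast)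
qed

theorem lemma3:
  fixes n :: nat
  assumes "odd n" and "3 dvd n"
  shows "\<exists>Q. conflict_free n Q \<and> card Q = n - 2"
proof -
  have "n mod 6 = 3" using assms by presburger
  then obtain hn :: nat where hn: "n = 6*hn+3" by (metis div_mod_decomp mult.commute)
  define h where "h = int hn"
  have h: "h \<ge> 0" unfolding h_def by simp
  define N where "N = 6*h+3"
  have nN: "int n = N" unfolding N_def h_def hn by simp
  have nN': "n = nat N" using nN by simp
  define f where "f = (\<lambda>i. (i, (2*i + dd h i) mod N))"
  define S where "S = {i. inS h i}"
  have S_eq: "S = {0..<N} - {h, 6*h+2}" unfolding S_def inS_def N_def by auto
  have injf: "inj_on f S" unfolding f_def by (rule inj_onI) simp
  have cardS: "card S = n - 2"
  proof -
    have "card S = card {0..<N} - card {h, 6*h+2}"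
      unfolding S_eq by (rule card_Diff_subset) (use h N_def in auto)
    also have "card {h, 6*h+2} = 2"
      using h by simp
    also have "card {0..<N} = n" using nN by simp
    finally show ?thesis .
  qed
  have cf: "conflict_free n (f ` S)"
    unfolding conflict_free_def
  proof (intro conjI ballI impI)
    show "f ` S \<subseteq> torus_board n"
      unfolding torus_board_def nN f_def S_def inS_def N_def using h by auto
  next
    fix p q assume p: "p \<in> f ` S" and q: "q \<in> f ` S" and pq: "p \<noteq> q"
    from p obtain i where i: "i \<in> S" and pi: "p = f i" by blast
    from q obtain j where j: "j \<in> S" and qj: "q = f j" by blast
    have "i \<noteq> j" using pq pi qj by blast
    then show "\<not> queens_conflict n p q"
      using main_int[OF h, of i j] i j unfolding pi qj f_def S_def N_def nN' by auto
  qed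
  show ?thesis
    by (rule exI[of _ "f ` S"]) (simp add: cf card_image[OF injf] cardS)
qed

end
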